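(* Let $X$ be a hyperbolic approximation of $Z$ with parameter $r$, let $v,v'\in V$ be horizontally distinct, and let $l$ be their critical level. Then $|vv'|\le\ell(v)+\ell(v')-2l+3$.
   Context: Hyperbolic approximation: let $(Z,d)$ be a bounded metric space with at least two points and fix $0<r\le1/6$. Let $k_0$ be the largest integer with $\operatorname{diam}Z<r^{k_0}$. For each integer $k\ge k_0$ choose a maximal $r^k$-separated subset $V_k\subset Z$. Vertex set $V=\bigsqcup_{k\ge k_0}V_k$ (disjoint union), level $\ell(v)=k$ for $v\in V_k$, ball $B(v)=\{z:d(z,v)<2r^k\}$ with closure $\overline B(v)$. Edges: equal-level $v,v'$ with $\overline B(v)\cap\overline B(v')\ne\emptyset$, or vertices on adjacent levels whose higher-level ball is contained in the lower-level ball. Path metric with unit edges, $|vv'|$; $d$ is the metric of $Z$. Vertices $v,v'$ are horizontally distinct if $\ell(v),\ell(v')\ge0$ and $d(v,v')\ge r^{\min\{\ell(v),\ell(v')\}}$; in that case their critical level is the integer $l$ with $r^l\le d(v,v')<r^{l-1}$. *)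

theory Defs
  imports "HOL-Analysis.Analysis" "HOL-Library.Extended_Nat"
begin

text \<open>Vertices are pairs (k, v) with k \<ge> k0 and v \<in> V k,
  so the vertex set is the disjoint union of the V k; the level of (k,v) is k.\<close>

definition separated_set :: "'a::metric_space set \<Rightarrow> real \<Rightarrow> int \<Rightarrow> 'a set \<Rightarrow> bool" where
  "separated_set Z r k S \<longleftrightarrow> S \<subseteq> Z \<and> (\<forall>x\<in>S. \<forall>y\<in>S. x \<noteq> y \<longrightarrow> r powi k \<le> dist x y)"

definition maximal_separated :: "'a::metric_space set \<Rightarrow> real \<Rightarrow> int \<Rightarrow> 'a set \<Rightarrow> bool" where
  "maximal_separated Z r k S \<longleftrightarrow> separated_set Z r k S \<and>
     (\<forall>T. separated_set Z r k T \<and> S \<subseteq> T \<longrightarrow> T = S)"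

definition hyp_k0 :: "'a::metric_space set \<Rightarrow> real \<Rightarrow> int" where
  "hyp_k0 Z r = (GREATEST k::int. diameter Z < r powi k)"

definition hverts :: "'a::metric_space set \<Rightarrow> real \<Rightarrow> (int \<Rightarrow> 'a set) \<Rightarrow> (int \<times> 'a) set" where
  "hverts Z r V = {(k, v). hyp_k0 Z r \<le> k \<and> v \<in> V k}"

definition hball :: "'a::metric_space set \<Rightarrow> real \<Rightarrow> int \<times> 'a \<Rightarrow> 'a set" where
  "hball Z r p = {z \<in> Z. dist z (snd p) < 2 * r powi (fst p)}"

definition hcball :: "'a::metric_space set \<Rightarrow> real \<Rightarrow> int \<times> 'a \<Rightarrow> 'a set" where
  "hcball Z r p = Z \<inter> closure (hball Z r p)"

definition hedge :: "'a::metric_space set \<Rightarrow> real \<Rightarrow> (int \<Rightarrow> 'a set) \<Rightarrow> int \<times> 'a \<Rightarrow> int \<times> 'a \<Rightarrow> bool" where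
  "hedge Z r V p q \<longleftrightarrow> p \<in> hverts Z r V \<and> q \<in> hverts Z r V \<and> p \<noteq> q \<and>
     ((fst p = fst q \<and> hcball Z r p \<inter> hcball Z r q \<noteq> {}) \<or>
      (fst q = fst p + 1 \<and> hball Z r q \<subseteq> hball Z r p) \<or>
      (fst p = fst q + 1 \<and> hball Z r p \<subseteq> hball Z r q))"

definition hpath :: "'a::metric_space set \<Rightarrow> real \<Rightarrow> (int \<Rightarrow> 'a set) \<Rightarrow> int \<times> 'a \<Rightarrow> int \<times> 'a \<Rightarrow> (int \<times> 'a) list \<Rightarrow> bool" where
  "hpath Z r V p q xs \<longleftrightarrow> xs \<noteq> [] \<and> hd xs = p \<and> last xs = q \<and>
     (\<forall>i < length xs - 1. hedge Z r V (xs ! i) (xs ! Suc i))"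

text \<open>Path metric with unit edges (infinity if no path exists).\<close>
definition hdist :: "'a::metric_space set \<Rightarrow> real \<Rightarrow> (int \<Rightarrow> 'a set) \<Rightarrow> int \<times> 'a \<Rightarrow> int \<times> 'a \<Rightarrow> enat" where
  "hdist Z r V p q = Inf {enat (length xs - 1) | xs. hpath Z r V p q xs}"

definition horiz_distinct :: "real \<Rightarrow> int \<times> 'a::metric_space \<Rightarrow> int \<times> 'a \<Rightarrow> bool" where
  "horiz_distinct r p q \<longleftrightarrow> 0 \<le> fst p \<and> 0 \<le> fst q \<and>
     r powi (min (fst p) (fst q)) \<le> dist (snd p) (snd q)"

definition critical_level :: "real \<Rightarrow> int \<times> 'a::metric_space \<Rightarrow> int \<times> 'a \<Rightarrow> int \<Rightarrow> bool" where
  "critical_level r p q l \<longleftrightarrow> r powi l \<le> dist (snd p) (snd q) \<and> dist (snd p) (snd q) < r powi (l - 1)"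

end

theory Submission
  imports Defs
begin

inductive reach :: "'a::metric_space set \<Rightarrow> real \<Rightarrow> (int \<Rightarrow> 'a set) \<Rightarrow> nat \<Rightarrow> int \<times> 'a \<Rightarrow> int \<times> 'a \<Rightarrow> bool"
  for Z r V where
  r0: "reach Z r V 0 p p"
| rS: "reach Z r V n p q \<Longrightarrow> hedge Z r V q s \<Longrightarrow> reach Z r V (Suc n) p s"

lemma hedge_sym: "hedge Z r V p q \<Longrightarrow> hedge Z r V q p"
  unfolding hedge_def by auto

lemma reach_cons: "reach Z r V n q s \<Longrightarrow> hedge Z r V p q \<Longrightarrow> reach Z r V (Suc n) p s"
  by (induction rule: reach.induct) (auto intro: reach.intros)

lemma reach_sym: "reach Z r V n p q \<Longrightarrow> reach Z r V n q p"
  by (induction rule: reach.induct) (auto intro: reach.intros reach_cons hedge_sym)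

lemma reach_trans: "reach Z r V n q s \<Longrightarrow> reach Z r V m p q \<Longrightarrow> reach Z r V (m + n) p s"
  by (induction rule: reach.induct) (auto intro: reach.intros)

lemma reach_path: "reach Z r V n p q \<Longrightarrow> \<exists>xs. hpath Z r V p q xs \<and> length xs = Suc n"
proof (induction rule: reach.induct)
  case (r0 p)
  then show ?case by (rule exI[of _ "[p]"]) (simp add: hpath_def)
next
  case (rS n p q s)
  then obtain xs where xs: "hpath Z r V p q xs" "length xs = Suc n" by blast
  have "hpath Z r V p s (xs @ [s])"
    unfolding hpath_def
  proof (intro conjI allI impI)
    show "hd (xs @ [s]) = p" using xs by (simp add: hpath_def)
    fix i assume i: "i < length (xs @ [s]) - 1"
    show "hedge Z r V ((xs @ [s]) ! i) ((xs @ [s]) ! Suc i)"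
    proof (cases "i < length xs - 1")
      case True
      then show ?thesis using xs by (simp add: hpath_def nth_append)
    next
      case False
      then have "i = length xs - 1" using i by simp
      moreover have "xs ! (length xs - 1) = q" using xs unfolding hpath_def by (metis last_conv_nth)
      ultimately show ?thesis using rS.hyps(2) xs(2) by (simp add: nth_append)
    qed
  qed simp_all
  then show ?case using xs by auto
qed

lemma reach_hdist: "reach Z r V n p q \<Longrightarrow> hdist Z r V p q \<le> enat n"
proof -
  assume "reach Z r V n p q"
  then obtain xs where "hpath Z r V p q xs" "length xs = Suc n" using reach_path by blast
  then have "enat n \<in> {enat (length xs - 1) | xs. hpath Z r V p q xs}" by force
  then show ?thesis unfolding hdist_def by (rule Inf_lower)
qed

lemma close_pt:
  assumes "maximal_separated Z r j (V j)" "z \<in> Z" "0 < r"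
  shows "\<exists>p\<in>V j. dist z p < r powi j"
proof (rule ccontr)
  assume a: "\<not> ?thesis"
  have sep: "separated_set Z r j (V j)" using assms(1) by (simp add: maximal_separated_def)
  have "separated_set Z r j (insert z (V j))"
    using sep a assms(2) unfolding separated_set_def by (auto simp: dist_commute not_less)
  then have "insert z (V j) = V j" using assms(1) unfolding maximal_separated_def by blast
  then have "z \<in> V j" by blast
  then show False using a assms(3) by force
qed

lemma up_chain:
  assumes r: "0 < r" "r \<le> 1/6"
    and maxs: "\<forall>k. hyp_k0 Z r \<le> k \<longrightarrow> maximal_separated Z r k (V k)"
    and v: "(k, x) \<in> hverts Z r V"
  shows "d \<le> nat (k - hyp_k0 Z r) \<Longrightarrow> \<exists>y. reach Z r V d (k, x) (k - int d, y) \<and> y \<in> V (k - int d)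
          \<and> dist x y < r powi (k - int d)"
proof (induction d)
  case 0
  then show ?case using r v by (auto intro: reach.intros simp: hverts_def)
next
  case (Suc d)
  define m where "m = k - int (Suc d)"
  have km: "hyp_k0 Z r \<le> m" using Suc.prems unfolding m_def by linarith
  have kx: "hyp_k0 Z r \<le> k" "x \<in> V k" using v by (auto simp: hverts_def)
  have xZ: "x \<in> Z" using maxs kx by (auto simp: maximal_separated_def separated_set_def)
  obtain y where y: "reach Z r V d (k, x) (m + 1, y)" "y \<in> V (m + 1)" "dist x y < r powi (m + 1)"
    using Suc m_def by (auto simp: algebra_simps)
  obtain p where p: "p \<in> V m" "dist x p < r powi m"
    using close_pt[OF _ xZ r(1)] maxs km by blast
  define R where "R = r powi m"
  have R: "0 < R" using r by (simp add: R_def)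
  have R1: "r powi (m + 1) = R * r" using r by (simp add: R_def power_int_add_1)
  have Rr: "R * r \<le> R / 6" using R r by (simp add: mult_left_mono)
  have "hedge Z r V (m + 1, y) (m, p)"
    unfolding hedge_def
  proof (intro conjI)
    show "(m + 1, y) \<in> hverts Z r V" "(m, p) \<in> hverts Z r V"
      using y p km by (auto simp: hverts_def)
    show "(m + 1, y) \<noteq> (m, p)" by simp
    have "hball Z r (m + 1, y) \<subseteq> hball Z r (m, p)"
    proof
      fix z assume "z \<in> hball Z r (m + 1, y)"
      then have z: "z \<in> Z" "dist z y < 2 * (R * r)" by (auto simp: hball_def R1)
      have "dist z p \<le> dist z y + dist y x + dist x p" by (metis dist_triangle add.assoc order_trans dist_commute add_mono order_refl)
      also have "\<dots> < 2 * R"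
      proof -
        have "dist y x < R * r" using y(3) R1 by (simp add: dist_commute)
        moreover have "dist x p < R" using p(2) by (simp add: R_def)
        ultimately show ?thesis using z(2) Rr R by linarith
      qed
      finally show "z \<in> hball Z r (m, p)" using z by (simp add: hball_def R_def)
    qed
    then show "fst (m + 1, y) = fst (m, p) \<and> hcball Z r (m + 1, y) \<inter> hcball Z r (m, p) \<noteq> {} \<or>
      fst (m, p) = fst (m + 1, y) + 1 \<and> hball Z r (m, p) \<subseteq> hball Z r (m + 1, y) \<or>
      fst (m + 1, y) = fst (m, p) + 1 \<and> hball Z r (m + 1, y) \<subseteq> hball Z r (m, p)" by simp
  qed
  then have "reach Z r V (Suc d) (k, x) (m, p)" by (rule reach.rS[OF y(1)])
  then show ?case using p m_def by auto
qed

lemma k0_prop: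
  assumes "bounded Z" "x \<in> Z" "y \<in> Z" "x \<noteq> y" "0 < r" "r < 1"
  shows "diameter Z < r powi hyp_k0 Z r"
proof -
  have dpos: "0 < diameter Z"
    using diameter_bounded_bound[OF assms(1-3)] assms(4) by (meson less_le_trans zero_less_dist_iff)
  obtain n where n: "r ^ n < diameter Z" using real_arch_pow_inv[OF dpos assms(6)] by blast
  obtain n' where n': "diameter Z < (inverse r) ^ n'"
    using real_arch_pow[of "inverse r" "diameter Z"] assms(5,6) by (auto simp: one_less_inverse)
  let ?P = "\<lambda>k::int. diameter Z < r powi k"
  have P1: "?P (- int n')" using n' assms(5) by (simp add: power_int_minus power_inverse)
  have ub: "k < int n" if "?P k" for k
  proof (rule ccontr)
    assume "\<not> k < int n"
    then have "r powi k \<le> r powi (int n)" using assms(5,6) by (intro power_int_decreasing) auto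
    then show False using that n by simp
  qed
  define S where "S = {k. ?P k \<and> - int n' \<le> k \<and> k \<le> int n}"
  have fin: "finite S" unfolding S_def by (rule finite_subset[of _ "{- int n'..int n}"]) auto
  have ne: "- int n' \<in> S" using P1 ub unfolding S_def by force
  define M where "M = Max S"
  have MS: "M \<in> S" using fin ne M_def Max_in by blast
  have great: "k \<le> M" if "?P k" for k
  proof (cases "- int n' \<le> k")
    case True
    then have "k \<in> S" using that ub unfolding S_def by force
    then show ?thesis using fin M_def by simp
  next
    case False
    then show ?thesis using MS unfolding S_def by auto
  qed
  have "(GREATEST k. ?P k) = M"
    by (rule Greatest_equality) (use MS great S_def in auto)
  then show ?thesis using MS unfolding hyp_k0_def S_def by simp
qed

theorem mainTheorem15:
  fixes Z :: "'a::metric_space set" and r :: real and V :: "int \<Rightarrow> 'a set"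
    and v v' :: "int \<times> 'a" and l :: int
  assumes "bounded Z" and "\<exists>x\<in>Z. \<exists>y\<in>Z. x \<noteq> y"
    and "0 < r" and "r \<le> 1/6"
    and "\<forall>k. hyp_k0 Z r \<le> k \<longrightarrow> maximal_separated Z r k (V k)"
    and "v \<in> hverts Z r V" and "v' \<in> hverts Z r V"
    and "horiz_distinct r v v'"
    and "critical_level r v v' l"
  shows "\<exists>n::nat. hdist Z r V v v' = enat n \<and> int n \<le> fst v + fst v' - 2 * l + 3"
proof -
  obtain k x k' x' where vv: "v = (k, x)" "v' = (k', x')" by (cases v, cases v')
  have r1: "r < 1" using assms(4) by simp
  have kx: "hyp_k0 Z r \<le> k" "x \<in> V k" "hyp_k0 Z r \<le> k'" "x' \<in> V k'"
    using assms(6,7) vv by (auto simp: hverts_def)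
  have xZ: "x \<in> Z" "x' \<in> Z" using assms(5) kx by (auto simp: maximal_separated_def separated_set_def)
  have dl: "r powi l \<le> dist x x'" "dist x x' < r powi (l - 1)"
    using assms(9) vv by (auto simp: critical_level_def)
  have hd: "r powi (min k k') \<le> dist x x'" using assms(8) vv by (simp add: horiz_distinct_def)
  have lk: "l - 1 < k" "l - 1 < k'"
  proof -
    have "l - 1 < min k k'"
    proof (rule ccontr)
      assume "\<not> l - 1 < min k k'"
      then have "r powi (l - 1) \<le> r powi (min k k')" using assms(3) r1 by (intro power_int_decreasing) auto
      then show False using hd dl by simp
    qed
    then show "l - 1 < k" "l - 1 < k'" by auto
  qed
  obtain a b where ab: "a \<in> Z" "b \<in> Z" "a \<noteq> b" using assms(2) by blast
  have dm: "diameter Z < r powi hyp_k0 Z r" using k0_prop[OF assms(1) ab assms(3) r1] .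
  have "dist x x' \<le> diameter Z" using diameter_bounded_bound[OF assms(1) xZ] .
  then have "r powi l < r powi hyp_k0 Z r" using dl dm by linarith
  then have k0l: "hyp_k0 Z r \<le> l - 1"
    using power_int_decreasing[of l "hyp_k0 Z r" r] assms(3) r1 by (cases "l \<le> hyp_k0 Z r") auto
  define d where "d = nat (k - (l - 1))"
  define d' where "d' = nat (k' - (l - 1))"
  have dd: "k - int d = l - 1" "k' - int d' = l - 1" using lk unfolding d_def d'_def by auto
  obtain y where y: "reach Z r V d (k, x) (l - 1, y)" "y \<in> V (l - 1)" "dist x y < r powi (l - 1)"
  proof -
    have "d \<le> nat (k - hyp_k0 Z r)" using k0l unfolding d_def by auto
    from up_chain[OF assms(3,4,5), of k x d, OF _ this] assms(6) vv dd(1)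
    show ?thesis using that by auto
  qed
  obtain y' where y': "reach Z r V d' (k', x') (l - 1, y')" "y' \<in> V (l - 1)" "dist x' y' < r powi (l - 1)"
  proof -
    have "d' \<le> nat (k' - hyp_k0 Z r)" using k0l unfolding d'_def by auto
    from up_chain[OF assms(3,4,5), of k' x' d', OF _ this] assms(7) vv dd(2)
    show ?thesis using that by auto
  qed
  have y'r: "reach Z r V d' (l - 1, y') (k', x')" using y'(1) by (rule reach_sym)
  have "\<exists>N. reach Z r V N v v' \<and> N \<le> d + 1 + d'"
  proof (cases "y = y'")
    case True
    have "reach Z r V (d + d') v v'" using reach_trans[OF y'r] y(1) True vv by simp
    then show ?thesis by auto
  next
    case False
    have "hedge Z r V (l - 1, y) (l - 1, y')"
      unfolding hedge_def
    proof (intro conjI disjI1)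
      show "(l - 1, y) \<in> hverts Z r V" "(l - 1, y') \<in> hverts Z r V"
        using y y' k0l by (auto simp: hverts_def)
      show "(l - 1, y) \<noteq> (l - 1, y')" using False by simp
      show "fst (l - 1, y) = fst (l - 1, y')" by simp
      have "dist x y' \<le> dist x x' + dist x' y'" by (rule dist_triangle)
      then have "dist x y' < 2 * r powi (l - 1)" using dl y' by simp
      then have "x \<in> hball Z r (l - 1, y')" using xZ by (simp add: hball_def dist_commute)
      moreover have "x \<in> hball Z r (l - 1, y)" proof -
        have "0 < r powi (l - 1)" using assms(3) by simp
        then show ?thesis using xZ y(3) by (simp add: hball_def dist_commute)
      qed
      ultimately have "x \<in> hcball Z r (l - 1, y) \<inter> hcball Z r (l - 1, y')"
        using xZ closure_subset by (auto simp: hcball_def)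
      then show "hcball Z r (l - 1, y) \<inter> hcball Z r (l - 1, y') \<noteq> {}" by blast
    qed
    then have "reach Z r V (Suc d) (k, x) (l - 1, y')" by (rule reach.rS[OF y(1)])
    then show ?thesis using reach_trans[OF y'r] vv by fastforce
  qed
  then obtain N where N: "reach Z r V N v v'" "N \<le> d + 1 + d'" by blast
  have "hdist Z r V v v' \<le> enat N" using reach_hdist[OF N(1)] .
  then obtain n where n: "hdist Z r V v v' = enat n" "n \<le> N"
    by (cases "hdist Z r V v v'") auto
  have "int n \<le> int d + 1 + int d'" using n N by linarith
  also have "\<dots> = fst v + fst v' - 2 * l + 3" using dd vv by simp
  finally show ?thesis using n by blast
qed

end
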